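(* Let $G=(V,E)$ be a simple connected graph with $n=|V|$ vertices and diameter $d=\mathrm{diam}(G)$. Suppose $G$ has a dominating set of size $\gamma$. Then the pebbling number of $G$ satisfies $$f(G) \leq 2^{d+1}\gamma + n - 3\gamma + 1.$$
   Context: A dominating set of $G$ is a set $S\subseteq V$ such that every vertex not in $S$ is adjacent to at least one vertex of $S$. A distribution of pebbles on $G$ is a function $D: V \to \mathbb{N}=\{0,1,2,\dots\}$; its size is $|D|=\sum_{v\in V} D(v)$. A pebbling step removes two pebbles from some vertex and places one pebble on an adjacent vertex. For a root vertex $v$, $D$ is $v$-solvable if, after some finite sequence of pebbling steps starting from $D$, at least one pebble is on $v$; $D$ is solvable if it is $v$-solvable for every $v\in V$. The pebbling number $f(G)$ is the smallest integer $N$ such that every distribution of size $N$ on $G$ is solvable. *)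

theory Defs
  imports Main
begin

definition simple_graph :: "'a set \<Rightarrow> ('a \<Rightarrow> 'a \<Rightarrow> bool) \<Rightarrow> bool" where
  "simple_graph V E \<longleftrightarrow> finite V \<and> V \<noteq> {} \<and>
     (\<forall>u v. E u v \<longrightarrow> u \<in> V \<and> v \<in> V) \<and>
     (\<forall>u v. E u v \<longrightarrow> E v u) \<and> (\<forall>v. \<not> E v v)"

definition connected_graph :: "'a set \<Rightarrow> ('a \<Rightarrow> 'a \<Rightarrow> bool) \<Rightarrow> bool" where
  "connected_graph V E \<longleftrightarrow> (\<forall>u\<in>V. \<forall>v\<in>V. E\<^sup>*\<^sup>* u v)"

definition gdist :: "('a \<Rightarrow> 'a \<Rightarrow> bool) \<Rightarrow> 'a \<Rightarrow> 'a \<Rightarrow> nat" where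
  "gdist E u v = (LEAST k. (E ^^ k) u v)"

definition diam :: "'a set \<Rightarrow> ('a \<Rightarrow> 'a \<Rightarrow> bool) \<Rightarrow> nat" where
  "diam V E = Max {gdist E u v | u v. u \<in> V \<and> v \<in> V}"

definition dominating_set :: "'a set \<Rightarrow> ('a \<Rightarrow> 'a \<Rightarrow> bool) \<Rightarrow> 'a set \<Rightarrow> bool" where
  "dominating_set V E S \<longleftrightarrow> S \<subseteq> V \<and> (\<forall>v\<in>V - S. \<exists>s\<in>S. E v s)"

definition distribution :: "'a set \<Rightarrow> ('a \<Rightarrow> nat) \<Rightarrow> bool" where
  "distribution V D \<longleftrightarrow> (\<forall>v. v \<notin> V \<longrightarrow> D v = 0)"

definition dsize :: "'a set \<Rightarrow> ('a \<Rightarrow> nat) \<Rightarrow> nat" where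
  "dsize V D = (\<Sum>v\<in>V. D v)"

definition pebbling_step :: "('a \<Rightarrow> 'a \<Rightarrow> bool) \<Rightarrow> ('a \<Rightarrow> nat) \<Rightarrow> ('a \<Rightarrow> nat) \<Rightarrow> bool" where
  "pebbling_step E D D' \<longleftrightarrow>
     (\<exists>u w. E u w \<and> D u \<ge> 2 \<and> D' = D(u := D u - 2, w := D w + 1))"

definition solvable_at :: "('a \<Rightarrow> 'a \<Rightarrow> bool) \<Rightarrow> ('a \<Rightarrow> nat) \<Rightarrow> 'a \<Rightarrow> bool" where
  "solvable_at E D r \<longleftrightarrow> (\<exists>D'. (pebbling_step E)\<^sup>*\<^sup>* D D' \<and> D' r \<ge> 1)"

definition solvable :: "'a set \<Rightarrow> ('a \<Rightarrow> 'a \<Rightarrow> bool) \<Rightarrow> ('a \<Rightarrow> nat) \<Rightarrow> bool" where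
  "solvable V E D \<longleftrightarrow> (\<forall>r\<in>V. solvable_at E D r)"

definition pebbling_number :: "'a set \<Rightarrow> ('a \<Rightarrow> 'a \<Rightarrow> bool) \<Rightarrow> nat" where
  "pebbling_number V E = (LEAST N. \<forall>D. distribution V D \<and> dsize V D = N \<longrightarrow> solvable V E D)"

end

theory Submission
  imports Defs
begin

lemma move_lemma:
  assumes "E u w" "u \<noteq> w" "D u \<ge> 2*m"
  shows "(pebbling_step E)\<^sup>*\<^sup>* D (D(u := D u - 2*m, w := D w + m))"
  using assms(3)
proof (induction m)
  case 0
  then show ?case by simp
next
  case (Suc m)
  define D1 where "D1 = D(u := D u - 2*m, w := D w + m)"
  have "D u \<ge> 2*m" using Suc.prems by simp
  then have r1: "(pebbling_step E)\<^sup>*\<^sup>* D D1" unfolding D1_def by (rule Suc.IH)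
  have "D1 u \<ge> 2" using Suc assms(2) unfolding D1_def by simp
  then have "pebbling_step E D1 (D1(u := D1 u - 2, w := D1 w + 1))"
    unfolding pebbling_step_def using assms(1) by blast
  moreover have "D1(u := D1 u - 2, w := D1 w + 1) = D(u := D u - 2*Suc m, w := D w + Suc m)"
    using assms(2) unfolding D1_def by (auto simp: fun_eq_iff)
  ultimately show ?case using r1 by (metis rtranclp.rtrancl_into_rtrancl)
qed

lemma walk_lemma:
  assumes "\<forall>x y. E x y \<longrightarrow> x \<noteq> y"
  shows "(E^^k) s r \<Longrightarrow> D s \<ge> 2^k * m \<Longrightarrow> \<exists>D'. (pebbling_step E)\<^sup>*\<^sup>* D D' \<and> D' r \<ge> m"
proof (induction k arbitrary: s D m)
  case 0
  then show ?case by auto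
next
  case (Suc k)
  obtain w where w: "E s w" "(E^^k) w r" using Suc.prems(1) relpowp_Suc_D2 by metis
  have sw: "s \<noteq> w" using assms w by blast
  have "D s \<ge> 2 * (2^k*m)" using Suc.prems(2) by (simp add: mult.assoc)
  then have r1: "(pebbling_step E)\<^sup>*\<^sup>* D (D(s := D s - 2*(2^k*m), w := D w + 2^k*m))"
    by (rule move_lemma[of E s w "2^k*m" D, OF w(1) sw])
  have "(D(s := D s - 2*(2^k*m), w := D w + 2^k*m)) w \<ge> 2^k*m" by simp
  from Suc.IH[where D="D(s := D s - 2*(2^k*m), w := D w + 2^k*m)" and m=m, OF w(2) this] obtain D' where "(pebbling_step E)\<^sup>*\<^sup>* (D(s := D s - 2*(2^k*m), w := D w + 2^k*m)) D'" "D' r \<ge> m"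
    by blast
  then show ?case using r1 by (meson rtranclp_trans)
qed

lemma gather_lemma:
  assumes "finite A" "s \<notin> A" "\<forall>v\<in>A. E v s"
  shows "\<exists>D'. (pebbling_step E)\<^sup>*\<^sup>* D D' \<and> D' s \<ge> D s + (\<Sum>v\<in>A. D v div 2)
           \<and> (\<forall>x. x \<notin> A \<and> x \<noteq> s \<longrightarrow> D' x = D x)"
  using assms
proof (induction A rule: finite_induct)
  case empty
  then show ?case by auto
next
  case (insert a A)
  then obtain D1 where D1: "(pebbling_step E)\<^sup>*\<^sup>* D D1" "D1 s \<ge> D s + (\<Sum>v\<in>A. D v div 2)"
    "\<forall>x. x \<notin> A \<and> x \<noteq> s \<longrightarrow> D1 x = D x" by auto
  have as: "a \<noteq> s" using insert by auto
  have D1a: "D1 a = D a" using D1(3) insert as by auto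
  define m where "m = D a div 2"
  have "D1 a \<ge> 2*m" using D1a unfolding m_def by simp
  from move_lemma[of E a s m D1, OF _ as this] insert
  have r2: "(pebbling_step E)\<^sup>*\<^sup>* D1 (D1(a := D1 a - 2*m, s := D1 s + m))" by auto
  show ?case
  proof (intro exI conjI)
    show "(pebbling_step E)\<^sup>*\<^sup>* D (D1(a := D1 a - 2*m, s := D1 s + m))"
      using D1(1) r2 by (meson rtranclp_trans)
    show "D s + (\<Sum>v\<in>insert a A. D v div 2) \<le> (D1(a := D1 a - 2*m, s := D1 s + m)) s"
      using D1(2) insert(1,2) unfolding m_def by simp
    show "\<forall>x. x \<notin> insert a A \<and> x \<noteq> s \<longrightarrow> (D1(a := D1 a - 2*m, s := D1 s + m)) x = D x"
      using D1(3) by auto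
  qed
qed

theorem theorem4:
  fixes V :: "'a set" and E :: "'a \<Rightarrow> 'a \<Rightarrow> bool" and S :: "'a set"
  assumes "simple_graph V E"
    and "connected_graph V E"
    and "dominating_set V E S"
  shows "int (pebbling_number V E)
           \<le> 2 ^ (diam V E + 1) * int (card S) + int (card V) - 3 * int (card S) + 1"
proof -
  define d where "d = diam V E"
  define P :: nat where "P = 2^d"
  have finV: "finite V" and Vne: "V \<noteq> {}" and EV: "\<forall>u v. E u v \<longrightarrow> u \<in> V \<and> v \<in> V"
    and Esym: "\<forall>u v. E u v \<longrightarrow> E v u" and Eirr: "\<forall>v. \<not> E v v"
    using assms(1) unfolding simple_graph_def by auto
  have Eneq: "\<forall>x y. E x y \<longrightarrow> x \<noteq> y" using Eirr by auto
  have SV: "S \<subseteq> V" and dom: "\<forall>v\<in>V - S. \<exists>s\<in>S. E v s"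
    using assms(3) unfolding dominating_set_def by auto
  have finS: "finite S" using SV finV finite_subset by blast
  have cSV: "card S \<le> card V" using SV finV card_mono by blast
  define g where "g v = (if v \<in> S then v else (SOME s. s \<in> S \<and> E v s))" for v
  have gS: "g v \<in> S \<and> (v \<notin> S \<longrightarrow> E v (g v))" if "v \<in> V" for v
  proof (cases "v \<in> S")
    case True then show ?thesis unfolding g_def by simp
  next
    case False
    then have "\<exists>s. s \<in> S \<and> E v s" using dom that by blast
    then have "(SOME s. s \<in> S \<and> E v s) \<in> S \<and> E v (SOME s. s \<in> S \<and> E v s)" by (rule someI_ex)
    moreover have "g v = (SOME s. s \<in> S \<and> E v s)" using False unfolding g_def by simp
    ultimately show ?thesis by simp
  qed
  have gimg: "g ` V \<subseteq> S" using gS by auto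
  define C where "C s = {x. x \<in> V \<and> g x = s}" for s
  define N0 where "N0 = 2 * P * card S + card V + 1 - 3 * card S"
  have PS: "P \<ge> 1" unfolding P_def by simp
  have "2 * P * card S \<ge> 2 * card S" using PS by simp
  then have N0eq: "N0 + 3 * card S = 2 * P * card S + card V + 1" unfolding N0_def using cSV by linarith
  have key: "\<forall>D. distribution V D \<and> dsize V D = N0 \<longrightarrow> solvable V E D"
  proof (intro allI impI)
    fix D :: "'a \<Rightarrow> nat" assume "distribution V D \<and> dsize V D = N0"
    then have sumD: "(\<Sum>v\<in>V. D v) = N0" unfolding dsize_def by simp
    have sum1: "(\<Sum>s\<in>S. (\<Sum>v\<in>C s. D v)) = N0"
      using sum.group[OF finV finS gimg, of D] sumD unfolding C_def by simp
    have sum2: "(\<Sum>s\<in>S. card (C s)) = card V"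
      using sum.group[OF finV finS gimg, of "\<lambda>_. 1::nat"] unfolding C_def by simp
    have "\<exists>s\<in>S. (\<Sum>v\<in>C s. D v) + 2 \<ge> 2*P + card (C s)"
    proof (rule ccontr)
      assume "\<not> ?thesis"
      then have "\<forall>s\<in>S. (\<Sum>v\<in>C s. D v) + 3 \<le> 2*P + card (C s)" by auto
      then have "(\<Sum>s\<in>S. (\<Sum>v\<in>C s. D v) + 3) \<le> (\<Sum>s\<in>S. 2*P + card (C s))"
        by (intro sum_mono) auto
      then have "N0 + 3 * card S \<le> 2*P*card S + card V"
        using sum1 sum2 by (simp add: sum.distrib mult.commute)
      then show False using N0eq by linarith
    qed
    then obtain s where sS: "s \<in> S" and big: "(\<Sum>v\<in>C s. D v) + 2 \<ge> 2*P + card (C s)" by blast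
    define A where "A = C s - {s}"
    have sV: "s \<in> V" using sS SV by auto
    have sC: "s \<in> C s" unfolding C_def g_def using sV sS by simp
    have finC: "finite (C s)" unfolding C_def using finV by simp
    have finA: "finite A" unfolding A_def using finC by simp
    have CA: "C s = insert s A" unfolding A_def using sC by auto
    have sA: "s \<notin> A" unfolding A_def by simp
    have adj: "\<forall>v\<in>A. E v s"
    proof
      fix v assume "v \<in> A"
      then have "v \<in> V" "g v = s" "v \<noteq> s" unfolding A_def C_def by auto
      then show "E v s" using gS[of v] unfolding g_def by (auto split: if_splits)
    qed
    have sumC: "(\<Sum>v\<in>C s. D v) = D s + (\<Sum>v\<in>A. D v)" using CA finA sA by simp
    have cardC: "card (C s) = card A + 1" using CA finA sA by simp
    have sumA: "(\<Sum>v\<in>A. D v) \<le> (\<Sum>v\<in>A. 2 * (D v div 2) + 1)"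
      by (intro sum_mono) auto
    also have "\<dots> = (\<Sum>v\<in>A. 2 * (D v div 2)) + (\<Sum>v\<in>A. 1)"
      by (rule sum.distrib)
    also have "\<dots> = 2 * (\<Sum>v\<in>A. D v div 2) + card A"
      by (simp add: sum_distrib_left)
    finally have sumA': "(\<Sum>v\<in>A. D v) \<le> 2 * (\<Sum>v\<in>A. D v div 2) + card A" .
    obtain D' where D': "(pebbling_step E)\<^sup>*\<^sup>* D D'" "D' s \<ge> D s + (\<Sum>v\<in>A. D v div 2)"
      using gather_lemma[where A=A and s=s and E=E and D=D, OF finA sA adj] by blast
    have "D' s \<ge> P" using big sumC cardC sumA' D'(2) by linarith
    show "solvable V E D" unfolding solvable_def solvable_at_def
    proof
      fix r assume rV: "r \<in> V"
      have "E\<^sup>*\<^sup>* s r" using assms(2) sV rV unfolding connected_graph_def by blast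
      then obtain k0 where "(E^^k0) s r" using rtranclp_imp_relpowp by metis
      then have wk: "(E^^(gdist E s r)) s r" unfolding gdist_def by (rule LeastI)
      have "gdist E s r \<in> {gdist E u v | u v. u \<in> V \<and> v \<in> V}" using sV rV by blast
      moreover have "finite {gdist E u v | u v. u \<in> V \<and> v \<in> V}"
      proof -
        have "{gdist E u v | u v. u \<in> V \<and> v \<in> V} = (\<lambda>(u,v). gdist E u v) ` (V \<times> V)" by auto
        then show ?thesis using finV by simp
      qed
      ultimately have "gdist E s r \<le> d" unfolding d_def diam_def by simp
      then have "2 ^ gdist E s r * 1 \<le> P" unfolding P_def by (simp add: power_increasing)
      then have "D' s \<ge> 2 ^ gdist E s r * 1" using \<open>D' s \<ge> P\<close> by linarith
      from walk_lemma[where E=E and k="gdist E s r" and s=s and r=r and m=1 and D=D', OF Eneq wk this] obtain D'' where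
        "(pebbling_step E)\<^sup>*\<^sup>* D' D''" "D'' r \<ge> 1" by blast
      then show "\<exists>D''. (pebbling_step E)\<^sup>*\<^sup>* D D'' \<and> 1 \<le> D'' r" using D'(1) by (meson rtranclp_trans)
    qed
  qed
  have "pebbling_number V E \<le> N0" unfolding pebbling_number_def by (rule Least_le) (rule key)
  then have "int (pebbling_number V E) \<le> int N0" by simp
  also have "int N0 = 2 ^ (diam V E + 1) * int (card S) + int (card V) - 3 * int (card S) + 1"
  proof -
    have "int (N0 + 3 * card S) = int (2 * P * card S + card V + 1)" using N0eq by simp
    then have h: "int N0 + 3 * int (card S) = 2 * int P * int (card S) + int (card V) + 1"
      by simp
    have "int P = 2 ^ d" unfolding P_def by simp
    then have "2 * int P = 2 ^ (diam V E + 1)" unfolding d_def by simp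
    then have "2 * int P * int (card S) = 2 ^ (diam V E + 1) * int (card S)" by simp
    then show ?thesis using h by linarith
  qed
  finally show ?thesis .
qed

end
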